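(* Let $p,q$ be distinct positive integers and $n\ge1$. For every $x\in\{p,q\}^n$ and every sequence $s=(s_1,\dots,s_m)$, $m\ge1$, of elements of $\{p,q\}$, $$RLD^{p,q}_n(x, s_{1:m}) = RLD^{p,q}_n(y_1,(s_1))\circ RLD^{p,q}_n(y_2,(s_2))\circ\cdots\circ RLD^{p,q}_n(y_m,(s_m)),$$ where $\circ$ denotes concatenation, $y_1=x$, and $y_i=A^{p,q}_n(y_{i-1},(s_{i-1}))$ for $1<i\le m$.
   Context: Let $p,q$ be distinct positive integers. Define $\mathrm{Opp}(p)=q$, $\mathrm{Opp}(q)=p$. For $x\in\{p,q\}$ and a finite sequence $s=(s_1,\dots,s_m)$ of positive integers, $RLD^{p,q}(x,s)$ is the sequence over $\{p,q\}$ consisting of $s_1$ copies of $x$, then $s_2$ copies of $\mathrm{Opp}(x)$, then $s_3$ copies of $x$, and so on alternately. For $n\ge1$ and $x=(x_1,\dots,x_n)\in\{p,q\}^n$: $RLD^{p,q}_1(x_1,s)=RLD^{p,q}(x_1,s)$ and $RLD^{p,q}_n(x_{1:n},s)=RLD^{p,q}(x_n, RLD^{p,q}_{n-1}(x_{1:n-1},s))$. For a nonempty sequence $t$ over $\{p,q\}$, $\mathrm{OppEnd}(t)=\mathrm{Opp}(\text{last entry of } t)$. The automaton $A^{p,q}_n$ has state set $\{p,q\}^n$; for a state $x$ and a nonempty finite sequence $s$ over $\{p,q\}$, $A^{p,q}_n(x,s)$ is the state whose $i$-th coordinate is $\mathrm{OppEnd}(RLD^{p,q}_i(x_{1:i},s))$,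 $i=1,\dots,n$. *)

theory Defs
  imports Main
begin

definition Opp :: "nat \<Rightarrow> nat \<Rightarrow> nat \<Rightarrow> nat" where
  "Opp p q x = (if x = p then q else p)"

fun RLD :: "nat \<Rightarrow> nat \<Rightarrow> nat \<Rightarrow> nat list \<Rightarrow> nat list" where
  "RLD p q x [] = []"
| "RLD p q x (k # ks) = replicate k x @ RLD p q (Opp p q x) ks"

definition RLDn :: "nat \<Rightarrow> nat \<Rightarrow> nat list \<Rightarrow> nat list \<Rightarrow> nat list" where
  "RLDn p q xs s = foldl (\<lambda>t x. RLD p q x t) s xs"

definition OppEnd :: "nat \<Rightarrow> nat \<Rightarrow> nat list \<Rightarrow> nat" where
  "OppEnd p q t = Opp p q (last t)"

definition Aut :: "nat \<Rightarrow> nat \<Rightarrow> nat list \<Rightarrow> nat list \<Rightarrow> nat list" where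
  "Aut p q x s = map (\<lambda>i. OppEnd p q (RLDn p q (take (Suc i) x) s)) [0..<length x]"

fun states :: "nat \<Rightarrow> nat \<Rightarrow> nat list \<Rightarrow> nat list \<Rightarrow> nat list list" where
  "states p q y [] = []"
| "states p q y (c # cs) = y # states p q (Aut p q y [c]) cs"

end

theory Submission
  imports Defs
begin

lemma RLD_append:
  "RLD p q x (a @ b) = RLD p q x a @ RLD p q ((Opp p q ^^ length a) x) b"
  by (induction a arbitrary: x) (simp_all add: funpow_swap1)

lemma RLD_set: "set (RLD p q x t) \<subseteq> insert x {p, q}"
proof (induction t arbitrary: x)
  case Nil then show ?case by simp
next
  case (Cons k ks)
  have "set (RLD p q (Opp p q x) ks) \<subseteq> insert x {p, q}"
    using Cons[of "Opp p q x"] by (auto simp: Opp_def)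
  then show ?case by auto
qed

lemma RLD_last:
  assumes "a \<noteq> []" "\<forall>k\<in>set a. k > 0"
  shows "RLD p q x a \<noteq> [] \<and> Opp p q (last (RLD p q x a)) = (Opp p q ^^ length a) x"
  using assms
proof (induction a arbitrary: x)
  case Nil then show ?case by simp
next
  case (Cons k ks)
  show ?case
  proof (cases "ks = []")
    case True
    then show ?thesis using Cons.prems by simp
  next
    case False
    from Cons.IH[OF False, of "Opp p q x"] Cons.prems
    show ?thesis by (simp add: funpow_swap1)
  qed
qed

lemma RLDn_snoc: "RLDn p q (xs @ [y]) s = RLD p q y (RLDn p q xs s)"
  by (simp add: RLDn_def)

lemma RLDn_Nil: "RLDn p q xs [] = []"
  by (induction xs rule: rev_induct) (simp_all add: RLDn_snoc, simp add: RLDn_def)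

lemma Aut_snoc: "Aut p q (xs @ [y]) s = Aut p q xs s @ [OppEnd p q (RLDn p q (xs @ [y]) s)]"
  unfolding Aut_def by simp

lemma Aut_set: "set (Aut p q xs s) \<subseteq> {p, q}"
  unfolding Aut_def OppEnd_def Opp_def by auto

lemma main:
  assumes "p > 0" "q > 0" "set xs \<subseteq> {p, q}" "a \<noteq> []" "set a \<subseteq> {p, q}"
  shows "RLDn p q xs (a @ b) = RLDn p q xs a @ RLDn p q (Aut p q xs a) b
         \<and> RLDn p q xs a \<noteq> [] \<and> set (RLDn p q xs a) \<subseteq> {p, q}"
  using assms(3)
proof (induction xs rule: rev_induct)
  case Nil
  then show ?case using assms by (simp add: RLDn_def Aut_def)
next
  case (snoc y xs)
  then have y: "y \<in> {p, q}" and IH: "RLDn p q xs (a @ b) = RLDn p q xs a @ RLDn p q (Aut p q xs a) b"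
    "RLDn p q xs a \<noteq> []" "set (RLDn p q xs a) \<subseteq> {p, q}" by auto
  have pos: "\<forall>k\<in>set (RLDn p q xs a). k > 0" using IH(3) assms(1,2) by auto
  note L = RLD_last[OF IH(2) pos, of p q y]
  have "RLDn p q (xs @ [y]) (a @ b) = RLD p q y (RLDn p q xs a) @
     RLD p q ((Opp p q ^^ length (RLDn p q xs a)) y) (RLDn p q (Aut p q xs a) b)"
    by (simp add: RLDn_snoc IH(1) RLD_append)
  also have "\<dots> = RLDn p q (xs @ [y]) a @ RLDn p q (Aut p q (xs @ [y]) a) b"
    using L by (simp add: Aut_snoc RLDn_snoc OppEnd_def)
  finally show ?case using L RLD_set[of p q y "RLDn p q xs a"] y
    by (auto simp: RLDn_snoc)
qed

lemma gen:
  assumes "p > 0" "q > 0" "set x \<subseteq> {p, q}" "set s \<subseteq> {p, q}"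
  shows "RLDn p q x s =
         concat (map (\<lambda>(y, c). RLDn p q y [c]) (zip (states p q x s) s))"
  using assms(3,4)
proof (induction s arbitrary: x)
  case Nil then show ?case by (simp add: RLDn_Nil)
next
  case (Cons c cs)
  have "RLDn p q x (c # cs) = RLDn p q x ([c] @ cs)" by simp
  also have "\<dots> = RLDn p q x [c] @ RLDn p q (Aut p q x [c]) cs"
    using main[OF assms(1,2) Cons.prems(1), of "[c]" cs] Cons.prems by auto
  finally show ?case using Cons.IH[OF Aut_set] Cons.prems by simp
qed

theorem corollary1:
  fixes p q n :: nat and x s :: "nat list"
  assumes "p > 0" "q > 0" "p \<noteq> q" "n \<ge> 1"
    and "length x = n" "set x \<subseteq> {p, q}"
    and "length s \<ge> 1" "set s \<subseteq> {p, q}"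
  shows "RLDn p q x s =
         concat (map (\<lambda>(y, c). RLDn p q y [c]) (zip (states p q x s) s))"
  using gen assms by blast

end
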